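(* Fix $n\ge0$. For every formula $\phi\in\mathcal{L}^1$ and label $w$, every labelled sequent generated during the computation of $\mathtt{Prove_n}(w:\phi)$ is forestlike.
   Context: Single-agent setting: $Ag=\{1\}$. Formulas $\phi ::= p \mid \overline{p} \mid (\phi\wedge\phi) \mid (\phi\vee\phi) \mid \Box\phi \mid \Diamond\phi \mid [1]\phi \mid \langle 1\rangle\phi$; $\overline{\phi}$ swaps $p/\overline{p}$, $\wedge/\vee$, $\Box/\Diamond$, $[1]/\langle 1\rangle$. A labelled sequent $\mathcal{R},\Gamma$ consists of relational atoms $\mathcal{R}_1xy$ and labelled formulas $x:\phi$. Graphs. The graph $G(\Lambda)$ of a sequent $\Lambda$ has the labels of $\Lambda$ as vertices and a directed edge $(x,y)$ for each $\mathcal{R}_1xy\in\Lambda$; each vertex $x$ is labelled by the formulas $\phi$ with $x:\phi\in\Lambda$. A graph is a tree iff there is a node (root) with exactly one directed path to every other node; a forest is a disjoint union of trees. $\Lambda$ is forestlike iff $G(\Lambda)$ is a forest; each tree of it is a choice-tree, and $CT(w)$ denotes the choice-tree containing label $w$. For a forestlike $\Lambda$ and label $w$: $w$ is saturated iff (i) $w:\phi\in\Lambda$ implies $w:\overline{\phi}\notin\Lambda$, (ii) $w:\phi\vee\psi\in\Lambda$ implies $w:\phi\in\Lambda$ and $w:\psi\in\Lambda$, (iii) $w:\phi\wedge\psi\in\Lambda$ implies $w:\phi\in\Lambda$ or $w:\psi\in\Lambda$. $w$ is $\Box$-realized iff for each $w:\Box\phi\in\Lambda$ some label $u$ has $u:\phi\in\Lambda$;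 $[1]$-realized iff for each $w:[1]\phi\in\Lambda$ some $u$ in $CT(w)$ has $u:\phi\in\Lambda$; $\Diamond$-propagated iff for each $w:\Diamond\phi\in\Lambda$, $u:\phi\in\Lambda$ for all labels $u$ of $\Lambda$; $\langle1\rangle$-propagated iff for each $w:\langle1\rangle\phi\in\Lambda$, $u:\phi\in\Lambda$ for all $u$ in $CT(w)$. $\Lambda$ is $n$-choice consistent (for $n>0$) iff $G(\Lambda)$ has at most $n$ choice-trees. $\Lambda$ is stable iff all labels are saturated, $\Box$- and $[1]$-realized, $\Diamond$- and $\langle1\rangle$-propagated, and (when $n>0$) $\Lambda$ is $n$-choice consistent. Algorithm $\mathtt{Prove_n}(\mathcal{R},\Gamma)$ (returns true/false), steps tried in order: 1. If $\mathcal{R},\Gamma$ contains $w:p$ and $w:\overline{p}$ for some $w,p$, return true. 2. If $\mathcal{R},\Gamma$ is stable, return false. 3. If some label $w$ is not saturated: (i) if $w:\phi\vee\psi$ is present but $w:\phi$ or $w:\psi$ is absent, return $\mathtt{Prove_n}(\mathcal{R},w:\phi,w:\psi,\Gamma)$; (ii) if $w:\phi\wedge\psi$ is present but neither $w:\phi$ nor $w:\psi$ is, return false if $\mathtt{Prove_n}(\mathcal{R},w:\phi,\Gamma)$ or $\mathtt{Prove_n}(\mathcal{R},w:\psi,\Gamma)$ returns false, and true otherwise. 4. If some label $w$ is not $\langle1\rangle$-propagated, i.e. some $w:\langle1\rangle\phi$ is present and some $u$ in $CT(w)$ has $u:\phi$ absent, return $\mathtt{Prove_n}(\mathcal{R},u:\phi,\Gamma)$.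 5. If some $w$ is not $\Diamond$-propagated, i.e. some $w:\Diamond\phi$ is present and some label $u$ has $u:\phi$ absent, return $\mathtt{Prove_n}(\mathcal{R},u:\phi,\Gamma)$. 6. If some $w$ is not $[1]$-realized, i.e. some $w:[1]\phi$ is present with $u:\phi$ absent for every $u$ in $CT(w)$, return $\mathtt{Prove_n}(\mathcal{R},\mathcal{R}_1wv,v:\phi,\Gamma)$ with $v$ a fresh label. 7. If some $w$ is not $\Box$-realized, i.e. some $w:\Box\phi$ is present with $u:\phi$ absent for every label $u$, return $\mathtt{Prove_n}(\mathcal{R},v:\phi,\Gamma)$ with $v$ fresh. 8. (Only when $n>0$.) If $\mathcal{R},\Gamma$ is not $n$-choice consistent, pick distinct roots $w_0,\dots,w_n$ of choice-trees and, for each $0\le k\le n-1$, $k+1\le j\le n$, compute $\mathtt{Prove_n}(\mathcal{R},\mathcal{R}_1w_kw_j,\Gamma)$; return false if some call returns false, and true otherwise. For $n=0$ step 8 is absent and stability does not include $n$-choice consistency. *)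

theory Defs
  imports Main "HOL-Library.Disjoint_Sets"
begin

(* Formulas of L^1 (single agent) in negation normal form.
   Stit = [1], CStit = <1>. *)
datatype fml =
    Atom nat | NAtom nat
  | Conj fml fml | Disj fml fml
  | Box fml | Dia fml
  | Stit fml | CStit fml

fun neg :: "fml \<Rightarrow> fml" where
  "neg (Atom p) = NAtom p"
| "neg (NAtom p) = Atom p"
| "neg (Conj a b) = Disj (neg a) (neg b)"
| "neg (Disj a b) = Conj (neg a) (neg b)"
| "neg (Box a) = Dia (neg a)"
| "neg (Dia a) = Box (neg a)"
| "neg (Stit a) = CStit (neg a)"
| "neg (CStit a) = Stit (neg a)"

(* labels are natural numbers; a labelled sequent is a pair (R, Gamma):
   R = set of relational atoms R_1 x y (as pairs (x,y)),
   Gamma = set of labelled formulas x:phi (as pairs (x,phi)) *)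
type_synonym seq = "(nat \<times> nat) set \<times> (nat \<times> fml) set"

definition labels :: "seq \<Rightarrow> nat set" where
  "labels S = fst ` fst S \<union> snd ` fst S \<union> fst ` snd S"

definition is_dpath :: "(nat \<times> nat) set \<Rightarrow> nat list \<Rightarrow> bool" where
  "is_dpath E xs \<longleftrightarrow> xs \<noteq> [] \<and> distinct xs \<and>
     (\<forall>i. Suc i < length xs \<longrightarrow> (xs ! i, xs ! Suc i) \<in> E)"

definition is_tree :: "nat set \<Rightarrow> (nat \<times> nat) set \<Rightarrow> bool" where
  "is_tree V E \<longleftrightarrow> E \<subseteq> V \<times> V \<and>
     (\<exists>r\<in>V. \<forall>v\<in>V. v \<noteq> r \<longrightarrow> (\<exists>!xs. is_dpath E xs \<and> hd xs = r \<and> last xs = v))"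

definition is_forest :: "nat set \<Rightarrow> (nat \<times> nat) set \<Rightarrow> bool" where
  "is_forest V E \<longleftrightarrow> (\<exists>P. partition_on V P \<and>
     (\<forall>(x,y)\<in>E. \<exists>C\<in>P. x \<in> C \<and> y \<in> C) \<and>
     (\<forall>C\<in>P. is_tree C (E \<inter> (C \<times> C))))"

definition forestlike :: "seq \<Rightarrow> bool" where
  "forestlike S \<longleftrightarrow> is_forest (labels S) (fst S)"

(* the choice-tree containing w (= its weakly connected component) *)
definition CT :: "seq \<Rightarrow> nat \<Rightarrow> nat set" where
  "CT S w = {u. (w, u) \<in> (fst S \<union> (fst S)\<inverse>)\<^sup>*}"

definition is_root :: "seq \<Rightarrow> nat \<Rightarrow> bool" where
  "is_root S r \<longleftrightarrow> r \<in> labels S \<and>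
     (\<forall>u\<in>CT S r. u \<noteq> r \<longrightarrow> (\<exists>!xs. is_dpath (fst S) xs \<and> hd xs = r \<and> last xs = u))"

definition saturated :: "seq \<Rightarrow> nat \<Rightarrow> bool" where
  "saturated S w \<longleftrightarrow>
     (\<forall>\<phi>. (w,\<phi>) \<in> snd S \<longrightarrow> (w, neg \<phi>) \<notin> snd S) \<and>
     (\<forall>\<phi> \<psi>. (w, Disj \<phi> \<psi>) \<in> snd S \<longrightarrow> (w,\<phi>) \<in> snd S \<and> (w,\<psi>) \<in> snd S) \<and>
     (\<forall>\<phi> \<psi>. (w, Conj \<phi> \<psi>) \<in> snd S \<longrightarrow> (w,\<phi>) \<in> snd S \<or> (w,\<psi>) \<in> snd S)"

definition box_realized :: "seq \<Rightarrow> nat \<Rightarrow> bool" where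
  "box_realized S w \<longleftrightarrow> (\<forall>\<phi>. (w, Box \<phi>) \<in> snd S \<longrightarrow> (\<exists>u. (u,\<phi>) \<in> snd S))"

definition stit_realized :: "seq \<Rightarrow> nat \<Rightarrow> bool" where
  "stit_realized S w \<longleftrightarrow> (\<forall>\<phi>. (w, Stit \<phi>) \<in> snd S \<longrightarrow> (\<exists>u\<in>CT S w. (u,\<phi>) \<in> snd S))"

definition dia_propagated :: "seq \<Rightarrow> nat \<Rightarrow> bool" where
  "dia_propagated S w \<longleftrightarrow> (\<forall>\<phi>. (w, Dia \<phi>) \<in> snd S \<longrightarrow> (\<forall>u\<in>labels S. (u,\<phi>) \<in> snd S))"

definition cstit_propagated :: "seq \<Rightarrow> nat \<Rightarrow> bool" where
  "cstit_propagated S w \<longleftrightarrow> (\<forall>\<phi>. (w, CStit \<phi>) \<in> snd S \<longrightarrow> (\<forall>u\<in>CT S w. (u,\<phi>) \<in> snd S))"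

definition choice_consistent :: "nat \<Rightarrow> seq \<Rightarrow> bool" where
  "choice_consistent n S \<longleftrightarrow> card (CT S ` labels S) \<le> n"

definition stable :: "nat \<Rightarrow> seq \<Rightarrow> bool" where
  "stable n S \<longleftrightarrow>
     (\<forall>w\<in>labels S. saturated S w \<and> box_realized S w \<and> stit_realized S w \<and>
                    dia_propagated S w \<and> cstit_propagated S w) \<and>
     (0 < n \<longrightarrow> choice_consistent n S)"

definition closed :: "seq \<Rightarrow> bool" where
  "closed S \<longleftrightarrow> (\<exists>w p. (w, Atom p) \<in> snd S \<and> (w, NAtom p) \<in> snd S)"

(* applicability of the actions of steps 3--7 *)
definition app3 :: "seq \<Rightarrow> bool" where
  "app3 S \<longleftrightarrow>
     (\<exists>w \<phi> \<psi>. (w, Disj \<phi> \<psi>) \<in> snd S \<and> ((w,\<phi>) \<notin> snd S \<or> (w,\<psi>) \<notin> snd S)) \<or>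
     (\<exists>w \<phi> \<psi>. (w, Conj \<phi> \<psi>) \<in> snd S \<and> (w,\<phi>) \<notin> snd S \<and> (w,\<psi>) \<notin> snd S)"

definition app4 :: "seq \<Rightarrow> bool" where
  "app4 S \<longleftrightarrow> (\<exists>w \<phi> u. (w, CStit \<phi>) \<in> snd S \<and> u \<in> CT S w \<and> (u,\<phi>) \<notin> snd S)"

definition app5 :: "seq \<Rightarrow> bool" where
  "app5 S \<longleftrightarrow> (\<exists>w \<phi> u. (w, Dia \<phi>) \<in> snd S \<and> u \<in> labels S \<and> (u,\<phi>) \<notin> snd S)"

definition app6 :: "seq \<Rightarrow> bool" where
  "app6 S \<longleftrightarrow> (\<exists>w \<phi>. (w, Stit \<phi>) \<in> snd S \<and> (\<forall>u\<in>CT S w. (u,\<phi>) \<notin> snd S))"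

definition app7 :: "seq \<Rightarrow> bool" where
  "app7 S \<longleftrightarrow> (\<exists>w \<phi>. (w, Box \<phi>) \<in> snd S \<and> (\<forall>u. (u,\<phi>) \<notin> snd S))"

(* child n S S': Prove_n(S) makes a recursive call Prove_n(S') *)
inductive child :: "nat \<Rightarrow> seq \<Rightarrow> seq \<Rightarrow> bool" for n :: nat where
  step3i: "\<lbrakk>\<not> closed S; \<not> stable n S; (w, Disj \<phi> \<psi>) \<in> snd S;
            (w,\<phi>) \<notin> snd S \<or> (w,\<psi>) \<notin> snd S\<rbrakk>
           \<Longrightarrow> child n S (fst S, insert (w,\<phi>) (insert (w,\<psi>) (snd S)))"
| step3ii_l: "\<lbrakk>\<not> closed S; \<not> stable n S; (w, Conj \<phi> \<psi>) \<in> snd S;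
            (w,\<phi>) \<notin> snd S; (w,\<psi>) \<notin> snd S\<rbrakk>
           \<Longrightarrow> child n S (fst S, insert (w,\<phi>) (snd S))"
| step3ii_r: "\<lbrakk>\<not> closed S; \<not> stable n S; (w, Conj \<phi> \<psi>) \<in> snd S;
            (w,\<phi>) \<notin> snd S; (w,\<psi>) \<notin> snd S\<rbrakk>
           \<Longrightarrow> child n S (fst S, insert (w,\<psi>) (snd S))"
| step4: "\<lbrakk>\<not> closed S; \<not> stable n S; \<not> app3 S;
           (w, CStit \<phi>) \<in> snd S; u \<in> CT S w; (u,\<phi>) \<notin> snd S\<rbrakk>
           \<Longrightarrow> child n S (fst S, insert (u,\<phi>) (snd S))"
| step5: "\<lbrakk>\<not> closed S; \<not> stable n S; \<not> app3 S; \<not> app4 S;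
           (w, Dia \<phi>) \<in> snd S; u \<in> labels S; (u,\<phi>) \<notin> snd S\<rbrakk>
           \<Longrightarrow> child n S (fst S, insert (u,\<phi>) (snd S))"
| step6: "\<lbrakk>\<not> closed S; \<not> stable n S; \<not> app3 S; \<not> app4 S; \<not> app5 S;
           (w, Stit \<phi>) \<in> snd S; \<forall>u\<in>CT S w. (u,\<phi>) \<notin> snd S; v \<notin> labels S\<rbrakk>
           \<Longrightarrow> child n S (insert (w,v) (fst S), insert (v,\<phi>) (snd S))"
| step7: "\<lbrakk>\<not> closed S; \<not> stable n S; \<not> app3 S; \<not> app4 S; \<not> app5 S; \<not> app6 S;
           (w, Box \<phi>) \<in> snd S; \<forall>u. (u,\<phi>) \<notin> snd S; v \<notin> labels S\<rbrakk>
           \<Longrightarrow> child n S (fst S, insert (v,\<phi>) (snd S))"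
| step8: "\<lbrakk>\<not> closed S; \<not> stable n S; \<not> app3 S; \<not> app4 S; \<not> app5 S; \<not> app6 S; \<not> app7 S;
           0 < n; \<not> choice_consistent n S;
           inj_on r {0..n}; \<forall>i\<le>n. is_root S (r i); k < j; j \<le> n\<rbrakk>
           \<Longrightarrow> child n S (insert (r k, r j) (fst S), snd S)"

(* generated n S0 S: S is a sequent generated during the computation of Prove_n(S0) *)
inductive generated :: "nat \<Rightarrow> seq \<Rightarrow> seq \<Rightarrow> bool" for n :: nat and S0 :: seq where
  init: "generated n S0 S0"
| call: "\<lbrakk>generated n S0 S; child n S S'\<rbrakk> \<Longrightarrow> generated n S0 S'"

end

theory Submission
  imports Defs
begin

lemma dpath_single[simp]: "is_dpath E [x]"
  by (simp add: is_dpath_def)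

lemma dpath_snoc:
  assumes "xs \<noteq> []"
  shows "is_dpath E (xs@[z]) \<longleftrightarrow> is_dpath E xs \<and> z \<notin> set xs \<and> (last xs, z) \<in> E"
proof
  assume h: "is_dpath E (xs@[z])"
  have a: "(xs ! i, xs ! Suc i) \<in> E" if "Suc i < length xs" for i
    using h that unfolding is_dpath_def
    by (metis (no_types, lifting) Suc_lessD length_append_singleton less_SucI nth_append_left)
  have b: "(last xs, z) \<in> E"
    using h assms unfolding is_dpath_def
    by (metis (no_types, lifting) One_nat_def Suc_pred diff_Suc_less last_conv_nth length_append_singleton length_greater_0_conv lessI nth_append_left nth_append_length)
  show "is_dpath E xs \<and> z \<notin> set xs \<and> (last xs, z) \<in> E"
    using h a b assms unfolding is_dpath_def by auto
next
  assume h: "is_dpath E xs \<and> z \<notin> set xs \<and> (last xs, z) \<in> E"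
  show "is_dpath E (xs@[z])"
    unfolding is_dpath_def
  proof (intro conjI allI impI)
    show "distinct (xs @ [z])" using h unfolding is_dpath_def by auto
    fix i assume i: "Suc i < length (xs @ [z])"
    show "((xs @ [z]) ! i, (xs @ [z]) ! Suc i) \<in> E"
    proof (cases "Suc i < length xs")
      case True
      then show ?thesis using h unfolding is_dpath_def by (simp add: nth_append)
    next
      case False
      then have "Suc i = length xs" using i by simp
      then have "i = length xs - 1" by simp
      then show ?thesis using h assms \<open>Suc i = length xs\<close>
        by (simp add: nth_append last_conv_nth)
    qed
  qed simp
qed

lemma dpath_nonempty: "is_dpath E xs \<Longrightarrow> xs \<noteq> []"
  by (simp add: is_dpath_def)

lemma path_unique:
  assumes indeg: "\<And>x x' y. (x,y)\<in>E \<Longrightarrow> (x',y)\<in>E \<Longrightarrow> x = x'"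
  shows "is_dpath E xs \<Longrightarrow> is_dpath E ys \<Longrightarrow> hd xs = hd ys \<Longrightarrow> last xs = last ys
         \<Longrightarrow> (\<forall>x. (x, hd xs) \<notin> E) \<Longrightarrow> xs = ys"
proof (induction xs arbitrary: ys rule: rev_induct)
  case Nil
  then show ?case by (simp add: is_dpath_def)
next
  case (snoc z xs)
  have ysne: "ys \<noteq> []" using snoc.prems dpath_nonempty by blast
  obtain ys' y where ys: "ys = ys' @ [y]" using ysne by (metis rev_exhaust)
  have yz: "y = z" using snoc.prems ys by simp
  show ?case
  proof (cases "xs = []")
    case True
    then have "z = hd ys" using snoc.prems by simp
    show ?thesis
    proof (cases "ys' = []")
      case True
      then show ?thesis using ys yz \<open>xs = []\<close> by simp
    next
      case False
      then have "(last ys', z) \<in> E" using snoc.prems(2) ys yz dpath_snoc by blast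
      moreover have "hd (xs @ [z]) = z" using \<open>xs = []\<close> by simp
      ultimately show ?thesis using snoc.prems(5) by auto
    qed
  next
    case False
    have e1: "(last xs, z) \<in> E" and p1: "is_dpath E xs"
      using snoc.prems(1) False dpath_snoc by blast+
    show ?thesis
    proof (cases "ys' = []")
      case True
      then have "hd (xs @ [z]) = z" using snoc.prems(3) ys yz by simp
      then show ?thesis using e1 snoc.prems(5) by auto
    next
      case yF: False
      have e2: "(last ys', z) \<in> E" and p2: "is_dpath E ys'"
        using snoc.prems(2) yF ys yz dpath_snoc by blast+
      have "last xs = last ys'" using indeg e1 e2 by blast
      moreover have "hd xs = hd ys'" using snoc.prems(3) ys False yF by simp
      moreover have "\<forall>x. (x, hd xs) \<notin> E" using snoc.prems(5) False by simp
      ultimately have "xs = ys'" using snoc.IH p1 p2 by blast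
      then show ?thesis using ys yz by simp
    qed
  qed
qed

lemma path_exists:
  assumes dd: "\<And>x y. (x,y)\<in>E \<Longrightarrow> d y = (d x::int) + 1"
  shows "(r,v)\<in>E\<^sup>* \<Longrightarrow> \<exists>xs. is_dpath E xs \<and> hd xs = r \<and> last xs = v \<and>
            (\<forall>x\<in>set xs. (r,x)\<in>E\<^sup>* \<and> d x \<le> d v)"
proof (induction rule: rtrancl_induct)
  case base
  then show ?case by (intro exI[of _ "[r]"]) simp
next
  case (step y z)
  then obtain xs where xs: "is_dpath E xs" "hd xs = r" "last xs = y"
    "\<forall>x\<in>set xs. (r,x)\<in>E\<^sup>* \<and> d x \<le> d y" by blast
  have dz: "d z = d y + 1" using dd step.hyps(2) .
  have ne: "xs \<noteq> []" using xs(1) dpath_nonempty by blast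
  have "z \<notin> set xs" using xs(4) dz by force
  then have "is_dpath E (xs @ [z])" using dpath_snoc ne xs step.hyps(2) by blast
  moreover have "\<forall>x\<in>set (xs@[z]). (r,x)\<in>E\<^sup>* \<and> d x \<le> d z"
    using xs(4) dz step.hyps by auto
  ultimately show ?case using xs ne by (intro exI[of _ "xs@[z]"]) auto
qed

definition inv_f :: "(nat \<times> nat) set \<Rightarrow> bool" where
  "inv_f E \<longleftrightarrow> (\<forall>x x' y. (x,y)\<in>E \<longrightarrow> (x',y)\<in>E \<longrightarrow> x = x') \<and>
     (\<exists>\<rho> (d::nat\<Rightarrow>int). (\<forall>x y. (x,y)\<in>E \<longrightarrow> d y = d x + 1 \<and> \<rho> y = \<rho> x) \<and>
        (\<forall>v. (\<rho> v, v) \<in> E\<^sup>* \<and> (\<forall>x. (x, \<rho> v) \<notin> E)))"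

lemma rho_rtrancl:
  assumes "\<And>x y. (x,y)\<in>E \<Longrightarrow> \<rho> y = \<rho> x"
  shows "(r,x)\<in>E\<^sup>* \<Longrightarrow> \<rho> x = \<rho> r"
  by (induction rule: rtrancl_induct) (auto dest: assms)

lemma inv_forest:
  assumes inv: "inv_f E" and V1: "fst ` E \<subseteq> V" and V2: "snd ` E \<subseteq> V"
  shows "is_forest V E"
proof -
  have indeg: "\<And>x x' y. (x,y)\<in>E \<Longrightarrow> (x',y)\<in>E \<Longrightarrow> x = x'" using inv unfolding inv_f_def by blast
  obtain \<rho> and d :: "nat \<Rightarrow> int" where
    ed: "\<And>x y. (x,y)\<in>E \<Longrightarrow> d y = d x + 1" and er: "\<And>x y. (x,y)\<in>E \<Longrightarrow> \<rho> y = \<rho> x"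
    and rr: "\<And>v. (\<rho> v, v) \<in> E\<^sup>*" and ni: "\<And>v x. (x, \<rho> v) \<notin> E"
    using inv unfolding inv_f_def by blast
  have rho_idem: "\<rho> (\<rho> u) = \<rho> u" for u
    using rr[of "\<rho> u"] by (cases rule: rtranclE) (use ni in blast)+
  have rho_V: "\<rho> u \<in> V" if "u \<in> V" for u
    using rr[of u] that
  proof (cases rule: converse_rtranclE)
    case (step y)
    then show ?thesis using V1 by force
  qed simp
  have reachV: "x \<in> V" if "(r,x)\<in>E\<^sup>*" "r \<in> V" for r x
    using that(1)
  proof (cases rule: rtranclE)
    case (step y)
    then show ?thesis using V2 by force
  qed (use that in simp)
  define Cl where "Cl r = {u\<in>V. \<rho> u = r}" for r
  define P where "P = Cl ` {r\<in>V. \<rho> r = r}"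
  have part: "partition_on V P"
    unfolding partition_on_def
  proof (intro conjI)
    show "\<Union> P = V"
      unfolding P_def Cl_def using rho_idem rho_V by auto
    show "disjoint P"
      unfolding P_def Cl_def disjoint_def by auto
    show "{} \<notin> P"
      unfolding P_def Cl_def by auto
  qed
  have edges: "\<forall>(x,y)\<in>E. \<exists>C\<in>P. x \<in> C \<and> y \<in> C"
  proof (clarify)
    fix x y assume xy: "(x,y)\<in>E"
    have "x \<in> V" "y \<in> V" using xy V1 V2 by force+
    then show "\<exists>C\<in>P. x \<in> C \<and> y \<in> C"
      unfolding P_def Cl_def using er[OF xy] rho_idem rho_V
      by (intro bexI[of _ "Cl (\<rho> x)"]) (auto simp: Cl_def)
  qed
  have trees: "is_tree C (E \<inter> (C \<times> C))" if "C \<in> P" for C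
  proof -
    obtain r where r: "r \<in> V" "\<rho> r = r" "C = Cl r" using \<open>C \<in> P\<close> unfolding P_def by blast
    have rC: "r \<in> C" using r unfolding Cl_def by simp
    show ?thesis
      unfolding is_tree_def
    proof (intro conjI bexI[of _ r] ballI impI)
      show "E \<inter> C \<times> C \<subseteq> C \<times> C" by blast
      show "r \<in> C" by (rule rC)
      fix v assume vC: "v \<in> C" and vr: "v \<noteq> r"
      have rv: "(r, v) \<in> E\<^sup>*" using rr[of v] vC r unfolding Cl_def by simp
      obtain xs where xs: "is_dpath E xs" "hd xs = r" "last xs = v"
        "\<forall>x\<in>set xs. (r,x)\<in>E\<^sup>* \<and> d x \<le> d v"
        using path_exists[of E d r v, OF ed rv] by blast
      have inC: "x \<in> C" if "x \<in> set xs" for x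
      proof -
        have "(r,x)\<in>E\<^sup>*" using xs(4) that by blast
        then have "\<rho> x = r" "x \<in> V" using rho_rtrancl[of E \<rho>, OF er] r reachV by auto
        then show ?thesis using r unfolding Cl_def by simp
      qed
      have xsC: "is_dpath (E \<inter> (C \<times> C)) xs"
        using xs(1) inC unfolding is_dpath_def by (auto simp: nth_mem)
      have rni: "\<forall>x. (x, hd xs) \<notin> E" using ni[of r] r xs(2) by (metis ni)
      show "\<exists>!xs. is_dpath (E \<inter> C \<times> C) xs \<and> hd xs = r \<and> last xs = v"
      proof (rule ex1I[of _ xs])
        show "is_dpath (E \<inter> C \<times> C) xs \<and> hd xs = r \<and> last xs = v" using xsC xs by simp
        fix ys assume ys: "is_dpath (E \<inter> C \<times> C) ys \<and> hd ys = r \<and> last ys = v"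
        have "is_dpath E ys" using ys unfolding is_dpath_def by auto
        then show "ys = xs"
          using path_unique[of E ys xs] indeg ys xs rni by auto
      qed
    qed
  qed
  show ?thesis unfolding is_forest_def using part edges trees by blast
qed

lemma inv_empty: "inv_f {}"
  unfolding inv_f_def by (intro conjI exI[of _ id] exI[of _ "\<lambda>_. 0"]) auto

lemma rho_self:
  assumes "(\<rho> v, v) \<in> E\<^sup>*" "\<forall>x. (x, v) \<notin> E"
  shows "\<rho> v = v"
  using assms(1) by (cases rule: rtranclE) (use assms(2) in blast)+

lemma inv_fresh:
  assumes inv: "inv_f E" and fr: "\<forall>x. (x,v)\<notin>E \<and> (v,x)\<notin>E" and wv: "w \<noteq> v"
  shows "inv_f (insert (w,v) E)"
proof -
  have indeg: "\<And>x x' y. (x,y)\<in>E \<Longrightarrow> (x',y)\<in>E \<Longrightarrow> x = x'" using inv unfolding inv_f_def by blast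
  obtain \<rho> and d :: "nat \<Rightarrow> int" where
    ed: "\<And>x y. (x,y)\<in>E \<Longrightarrow> d y = d x + 1" and er: "\<And>x y. (x,y)\<in>E \<Longrightarrow> \<rho> y = \<rho> x"
    and rr: "\<And>v. (\<rho> v, v) \<in> E\<^sup>*" and ni: "\<And>v x. (x, \<rho> v) \<notin> E"
    using inv unfolding inv_f_def by blast
  have rv: "\<rho> u \<noteq> v" if "u \<noteq> v" for u
    using rr[of u] that
  proof (cases rule: converse_rtranclE)
    case (step y)
    then show ?thesis using fr by blast
  qed simp
  let ?E = "insert (w,v) E"
  define \<rho>' where "\<rho>' = \<rho>(v := \<rho> w)"
  define d' where "d' = d(v := d w + 1)"
  have "\<forall>x y. (x,y)\<in>?E \<longrightarrow> d' y = d' x + 1 \<and> \<rho>' y = \<rho>' x"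
    unfolding \<rho>'_def d'_def using ed er fr wv by auto
  moreover have "\<forall>u. (\<rho>' u, u) \<in> ?E\<^sup>* \<and> (\<forall>x. (x, \<rho>' u) \<notin> ?E)"
  proof
    fix u
    show "(\<rho>' u, u) \<in> ?E\<^sup>* \<and> (\<forall>x. (x, \<rho>' u) \<notin> ?E)"
    proof (cases "u = v")
      case True
      have "(\<rho> w, w) \<in> ?E\<^sup>*" using rr[of w] rtrancl_mono[of E ?E] by blast
      then have "(\<rho> w, v) \<in> ?E\<^sup>*" by (simp add: rtrancl_into_rtrancl)
      then show ?thesis using True rv[OF wv] ni unfolding \<rho>'_def by auto
    next
      case False
      have "(\<rho> u, u) \<in> ?E\<^sup>*" using rr[of u] rtrancl_mono[of E ?E] by blast
      then show ?thesis using False rv[OF False] ni unfolding \<rho>'_def by auto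
    qed
  qed
  moreover have "\<forall>x x' y. (x,y)\<in>?E \<longrightarrow> (x',y)\<in>?E \<longrightarrow> x = x'"
    using indeg fr by blast
  ultimately show ?thesis unfolding inv_f_def by blast
qed

lemma inv_roots:
  assumes inv: "inv_f E" and ab: "a \<noteq> b" and na: "\<forall>x. (x,a)\<notin>E" and nb: "\<forall>x. (x,b)\<notin>E"
  shows "inv_f (insert (a,b) E)"
proof -
  have indeg: "\<And>x x' y. (x,y)\<in>E \<Longrightarrow> (x',y)\<in>E \<Longrightarrow> x = x'" using inv unfolding inv_f_def by blast
  obtain \<rho> and d :: "nat \<Rightarrow> int" where
    ed: "\<And>x y. (x,y)\<in>E \<Longrightarrow> d y = d x + 1" and er: "\<And>x y. (x,y)\<in>E \<Longrightarrow> \<rho> y = \<rho> x"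
    and rr: "\<And>v. (\<rho> v, v) \<in> E\<^sup>*" and ni: "\<And>v x. (x, \<rho> v) \<notin> E"
    using inv unfolding inv_f_def by blast
  have ra: "\<rho> a = a" using rho_self[of \<rho> a E, OF rr na] .
  have rb: "\<rho> b = b" using rho_self[of \<rho> b E, OF rr nb] .
  let ?E = "insert (a,b) E"
  define \<rho>' where "\<rho>' u = (if \<rho> u = b then a else \<rho> u)" for u
  define d' where "d' u = (if \<rho> u = b then d u + d a + 1 - d b else d u)" for u
  have "\<forall>x y. (x,y)\<in>?E \<longrightarrow> d' y = d' x + 1 \<and> \<rho>' y = \<rho>' x"
    unfolding \<rho>'_def d'_def using ed er ra rb ab by auto
  moreover have "\<forall>u. (\<rho>' u, u) \<in> ?E\<^sup>* \<and> (\<forall>x. (x, \<rho>' u) \<notin> ?E)"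
  proof
    fix u
    have r1: "(\<rho> u, u) \<in> ?E\<^sup>*" using rr[of u] rtrancl_mono[of E ?E] by blast
    show "(\<rho>' u, u) \<in> ?E\<^sup>* \<and> (\<forall>x. (x, \<rho>' u) \<notin> ?E)"
    proof (cases "\<rho> u = b")
      case True
      have "(a, u) \<in> ?E\<^sup>*" using r1 True
        by (metis converse_rtrancl_into_rtrancl insertI1)
      then show ?thesis using True na ab unfolding \<rho>'_def by auto
    next
      case False
      then show ?thesis using r1 ni unfolding \<rho>'_def by auto
    qed
  qed
  moreover have "\<forall>x x' y. (x,y)\<in>?E \<longrightarrow> (x',y)\<in>?E \<longrightarrow> x = x'"
    using indeg nb by blast
  ultimately show ?thesis unfolding inv_f_def by blast
qed

lemma dpath_in_edge:
  assumes "is_dpath E xs" "hd xs \<noteq> last xs"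
  shows "\<exists>x. (x, last xs) \<in> E"
proof -
  have ne: "xs \<noteq> []" using assms dpath_nonempty by blast
  obtain ys z where xs: "xs = ys @ [z]" using ne by (metis rev_exhaust)
  have "ys \<noteq> []" using assms(2) xs by auto
  then have "(last ys, z) \<in> E" using assms(1) xs dpath_snoc by blast
  then show ?thesis using xs by auto
qed

lemma root_no_in:
  assumes inv: "inv_f (fst S)" and r: "is_root S r"
  shows "\<forall>x. (x, r) \<notin> fst S"
proof -
  obtain \<rho> where rr: "\<And>v. (\<rho> v, v) \<in> (fst S)\<^sup>*" and ni: "\<And>v x. (x, \<rho> v) \<notin> fst S"
    using inv unfolding inv_f_def by blast
  have "\<rho> r = r"
  proof (rule ccontr)
    assume ne: "\<rho> r \<noteq> r"
    have "(r, \<rho> r) \<in> ((fst S)\<inverse>)\<^sup>*" using rr[of r] by (simp add: rtrancl_converse)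
    then have "(r, \<rho> r) \<in> (fst S \<union> (fst S)\<inverse>)\<^sup>*" using rtrancl_mono[of "(fst S)\<inverse>" "fst S \<union> (fst S)\<inverse>"] by blast
    then have "\<rho> r \<in> CT S r" unfolding CT_def by simp
    then obtain xs where "is_dpath (fst S) xs" "hd xs = r" "last xs = \<rho> r"
      using r ne unfolding is_root_def by metis
    then show False using dpath_in_edge ni ne by metis
  qed
  then show ?thesis using ni by metis
qed

lemma child_inv:
  assumes "child n S S'" "inv_f (fst S)"
  shows "inv_f (fst S')"
  using assms
proof (induction rule: child.induct)
  case (step6 S w \<phi> v)
  have "w \<in> labels S" using step6.hyps(6) unfolding labels_def by force
  then have "w \<noteq> v" using step6.hyps by blast
  moreover have "\<forall>x. (x,v)\<notin>fst S \<and> (v,x)\<notin>fst S" using step6.hyps(8) unfolding labels_def by force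
  ultimately show ?case using inv_fresh step6.prems by simp
next
  case (step8 S r k j)
  have "r k \<noteq> r j" using step8.hyps(10,12,13) unfolding inj_on_def by fastforce
  moreover have "\<forall>x. (x, r k) \<notin> fst S" "\<forall>x. (x, r j) \<notin> fst S"
    using root_no_in[OF step8.prems] step8.hyps(11,12,13) by auto
  ultimately show ?case using inv_roots step8.prems by simp
qed auto

lemma gen_inv:
  assumes "generated n S0 S" "inv_f (fst S0)"
  shows "inv_f (fst S)"
  using assms by (induction rule: generated.induct) (auto intro: child_inv)

theorem lemma4:
  fixes n :: nat and \<phi> :: fml and w :: nat and S :: seq
  assumes "generated n ({}, {(w, \<phi>)}) S"
  shows "forestlike S"
proof -
  have "inv_f (fst S)" using gen_inv[OF assms] inv_empty by simp
  then show ?thesis unfolding forestlike_def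
    by (rule inv_forest) (auto simp: labels_def)
qed

end
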